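(* Let $\mathbb{F}$ be a field and $f(x)=(x-a)(x-b)\in\mathbb{F}[x]$ with $a,b\in\mathbb{F}^*$, $a\ne b$. Then every $f$-subgroup (in the multiplicative group of any extension field of $\mathbb{F}$) is one of $\langle a,b\rangle$, $\langle a\rangle$, $\langle b\rangle$. Moreover, if an $f$-subgroup $M$ is different from $\langle a,b\rangle$, then every $f$-sequence presenting $M$ is cyclic, so $M$ is a standard $f$-subgroup. Consequently $\langle a,b\rangle$ is the only possible non-standard $f$-subgroup.
   Context: An $f$-sequence is a two-way infinite sequence $(s_n)_{n\in\mathbb{Z}}$ with $f(\sigma)s=0$, where $(\sigma s)_n=s_{n+1}$ (here: $s_n=(a+b)s_{n-1}-ab\,s_{n-2}$). A sequence $s$ presents a finite multiplicative subgroup $M$ if $s$ has smallest period $|M|$ and $M=\{s_0,\ldots,s_{|M|-1}\}$; $M$ is an $f$-subgroup if some $f$-sequence presents it. A sequence is cyclic if there is $\alpha$ with $s_{n+1}=\alpha s_n$ for all $n$. An $f$-subgroup is standard if every $f$-sequence presenting it is cyclic, and non-standard otherwise. $\langle S\rangle$ is the multiplicative group generated by $S$. *)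

theory Defs
  imports Main
begin

text \<open>The field K plays the role of an arbitrary extension field of F containing a, b.\<close>

definition f_sequence :: "'a::field \<Rightarrow> 'a \<Rightarrow> (int \<Rightarrow> 'a) \<Rightarrow> bool" where
  "f_sequence a b s \<longleftrightarrow> (\<forall>n. s n = (a + b) * s (n - 1) - a * b * s (n - 2))"

definition mult_subgroup :: "'a::field set \<Rightarrow> bool" where
  "mult_subgroup M \<longleftrightarrow> M \<subseteq> - {0} \<and> 1 \<in> M \<and> (\<forall>x\<in>M. \<forall>y\<in>M. x * y \<in> M)
     \<and> (\<forall>x\<in>M. inverse x \<in> M)"

definition gen_group :: "'a::field set \<Rightarrow> 'a set" where
  "gen_group S = \<Inter> {H. mult_subgroup H \<and> S \<subseteq> H}"

definition is_period :: "(int \<Rightarrow> 'a) \<Rightarrow> nat \<Rightarrow> bool" where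
  "is_period s p \<longleftrightarrow> 0 < p \<and> (\<forall>n. s (n + int p) = s n)"

definition smallest_period :: "(int \<Rightarrow> 'a) \<Rightarrow> nat \<Rightarrow> bool" where
  "smallest_period s p \<longleftrightarrow> is_period s p \<and> (\<forall>q. 0 < q \<and> q < p \<longrightarrow> \<not> is_period s q)"

definition presents :: "(int \<Rightarrow> 'a::field) \<Rightarrow> 'a set \<Rightarrow> bool" where
  "presents s M \<longleftrightarrow> mult_subgroup M \<and> finite M \<and> smallest_period s (card M)
     \<and> M = s ` {0..<int (card M)}"

definition f_subgroup :: "'a::field \<Rightarrow> 'a \<Rightarrow> 'a set \<Rightarrow> bool" where
  "f_subgroup a b M \<longleftrightarrow> mult_subgroup M \<and> finite M \<and> (\<exists>s. f_sequence a b s \<and> presents s M)"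

definition cyclic_seq :: "(int \<Rightarrow> 'a::field) \<Rightarrow> bool" where
  "cyclic_seq s \<longleftrightarrow> (\<exists>\<alpha>. \<forall>n. s (n + 1) = \<alpha> * s n)"

definition standard_f_subgroup :: "'a::field \<Rightarrow> 'a \<Rightarrow> 'a set \<Rightarrow> bool" where
  "standard_f_subgroup a b M \<longleftrightarrow> f_subgroup a b M \<and>
     (\<forall>s. f_sequence a b s \<and> presents s M \<longrightarrow> cyclic_seq s)"

end

theory Submission imports Defs "HOL-Computational_Algebra.Polynomial" begin

lemma roots_unity_card:
  fixes m :: nat assumes "m > 0"
  shows "finite {x::'a::field. x ^ m = 1} \<and> card {x::'a. x ^ m = 1} \<le> m"
proof -
  define p :: "'a poly" where "p = monom 1 m + [:-1:]"
  have ev: "poly p x = x ^ m - 1" for x by (simp add: p_def poly_monom)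
  have deg: "degree p = m" using assms unfolding p_def
    by (subst degree_add_eq_left) (simp_all add: degree_monom_eq)
  have nz: "p \<noteq> 0" using deg assms by auto
  have eq: "{x. x ^ m = 1} = {x. poly p x = 0}" by (auto simp: ev)
  show ?thesis unfolding eq using poly_roots_finite[OF nz] card_poly_roots_bound[OF nz] deg by simp
qed

lemma lagrange:
  assumes H: "mult_subgroup H" "finite H" and x: "x \<in> H"
  shows "x ^ card H = 1"
proof -
  have nz: "\<And>y. y \<in> H \<Longrightarrow> y \<noteq> 0" using H(1) unfolding mult_subgroup_def by auto
  have x0: "x \<noteq> 0" using nz x .
  have inj: "inj_on ((*) x) H" using x0 by (auto simp: inj_on_def)
  have img: "(*) x ` H = H"
  proof
    show "(*) x ` H \<subseteq> H" using H(1) x unfolding mult_subgroup_def by auto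
    show "H \<subseteq> (*) x ` H"
    proof
      fix y assume y: "y \<in> H"
      have "inverse x * y \<in> H" using H(1) x y unfolding mult_subgroup_def by auto
      moreover have "y = x * (inverse x * y)" using x0 by simp
      ultimately show "y \<in> (*) x ` H" by blast
    qed
  qed
  have "prod id H = prod id ((*) x ` H)" using img by simp
  also have "\<dots> = prod (\<lambda>y. x * y) H" using prod.reindex[OF inj] by simp
  also have "\<dots> = x ^ card H * prod id H" by (simp add: prod.distrib)
  finally have "prod id H * 1 = prod id H * x ^ card H" by (simp add: mult.commute)
  moreover have "prod id H \<noteq> 0" using H(2) nz by (simp add: prod_zero_iff) 
  ultimately show ?thesis by simp
qed

lemma gen_lower: "mult_subgroup H \<Longrightarrow> S \<subseteq> H \<Longrightarrow> gen_group S \<subseteq> H"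
  unfolding gen_group_def by auto

lemma gen_upper: "S \<subseteq> gen_group S"
  unfolding gen_group_def by auto

lemma gen_sub:
  assumes "mult_subgroup H" "S \<subseteq> H"
  shows "mult_subgroup (gen_group S)"
proof -
  let ?F = "{H. mult_subgroup H \<and> S \<subseteq> H}"
  have ne: "H \<in> ?F" using assms by simp
  have z: "gen_group S \<subseteq> - {0}"
  proof -
    have "gen_group S \<subseteq> H" unfolding gen_group_def using ne by blast
    thus ?thesis using assms(1) unfolding mult_subgroup_def by blast
  qed
  have o: "1 \<in> gen_group S" unfolding gen_group_def mult_subgroup_def by blast
  have m: "x * y \<in> gen_group S" if "x \<in> gen_group S" "y \<in> gen_group S" for x y
  proof -
    have "x * y \<in> K" if K: "K \<in> ?F" for K
    proof -
      have "x \<in> K" "y \<in> K" using \<open>x \<in> gen_group S\<close> \<open>y \<in> gen_group S\<close> K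
        unfolding gen_group_def by blast+
      thus ?thesis using K unfolding mult_subgroup_def by simp
    qed
    thus ?thesis unfolding gen_group_def by blast
  qed
  have i: "inverse x \<in> gen_group S" if "x \<in> gen_group S" for x
  proof -
    have "inverse x \<in> K" if K: "K \<in> ?F" for K
    proof -
      have "x \<in> K" using \<open>x \<in> gen_group S\<close> K unfolding gen_group_def by blast
      thus ?thesis using K unfolding mult_subgroup_def by simp
    qed
    thus ?thesis unfolding gen_group_def by blast
  qed
  show ?thesis unfolding mult_subgroup_def using z o m i by blast
qed

lemma period_mult:
  assumes "is_period s p"
  shows "s (x + int p * k) = s x"
proof (induction k rule: int_induct[where k=0])
  case base then show ?case by simp
next
  case (step1 i)
  have "s (x + int p * (i + 1)) = s ((x + int p * i) + int p)" by (simp add: algebra_simps)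
  also have "\<dots> = s (x + int p * i)" using assms unfolding is_period_def by blast
  finally show ?case using step1 by simp
next
  case (step2 i)
  have "s (x + int p * i) = s ((x + int p * (i - 1)) + int p)" by (simp add: algebra_simps)
  also have "\<dots> = s (x + int p * (i - 1))" using assms unfolding is_period_def by blast
  finally show ?case using step2 by simp
qed

lemma pres_in:
  assumes "presents s M"
  shows "s n \<in> M"
proof -
  let ?m = "card M"
  have per: "is_period s ?m" using assms unfolding presents_def smallest_period_def by blast
  hence mpos: "0 < ?m" unfolding is_period_def by blast
  have "s n = s (n mod int ?m + int ?m * (n div int ?m))" by simp
  also have "\<dots> = s (n mod int ?m)" by (rule period_mult[OF per])
  finally have "s n = s (n mod int ?m)" .
  moreover have "n mod int ?m \<in> {0..<int ?m}" using mpos by simp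
  ultimately show ?thesis using assms unfolding presents_def by blast
qed

lemma cyc_case:
  assumes P: "presents s M" and c: "c \<noteq> 0" and st: "\<And>n. s (n + 1) = c * s n"
  shows "M = gen_group {c}"
proof -
  have sub: "mult_subgroup M" and MI: "M = s ` {0..<int (card M)}" using P unfolding presents_def by auto
  have "1 \<in> M" using sub unfolding mult_subgroup_def by auto
  then obtain k where k: "s k = 1" using MI by (metis imageE)
  have "c \<in> M" using pres_in[OF P, of "k+1"] st[of k] k by simp
  hence GM: "gen_group {c} \<subseteq> M" using gen_lower[OF sub] by auto
  have G: "mult_subgroup (gen_group {c})" using gen_sub[OF sub] \<open>c \<in> M\<close> by auto
  have cG: "c \<in> gen_group {c}" using gen_upper by auto
  have all: "s j \<in> gen_group {c}" for j
  proof (induction j rule: int_induct[where k=k])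
    case base then show ?case using k G unfolding mult_subgroup_def by auto
  next
    case (step1 i) then show ?case using st[of i] G cG unfolding mult_subgroup_def by auto
  next
    case (step2 i)
    have "s i = c * s (i - 1)" using st[of "i-1"] by simp
    hence "s (i - 1) = inverse c * s i" using c by (simp add: field_simps)
    then show ?case using step2 G cG unfolding mult_subgroup_def by auto
  qed
  have "s ` {0..<int (card M)} \<subseteq> gen_group {c}" using all by auto
  hence "M \<subseteq> gen_group {c}" using MI by simp
  thus ?thesis using GM by (rule antisym)
qed

lemma key:
  fixes a b :: "'a::field"
  assumes a: "a \<noteq> 0" and b: "b \<noteq> 0" and ab: "a \<noteq> b"
    and F: "f_sequence a b s" and P: "presents s M"
  shows "M = gen_group {a, b} \<or> (cyclic_seq s \<and> (M = gen_group {a} \<or> M = gen_group {b}))"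
proof -
  define u where "u n = s (n + 1) - b * s n" for n
  define v where "v n = s (n + 1) - a * s n" for n
  have rec: "s (n + 2) = (a + b) * s (n + 1) - a * b * s n" for n
  proof -
    have "s (n + 2) = (a + b) * s ((n + 2) - 1) - a * b * s ((n + 2) - 2)"
      using F unfolding f_sequence_def by blast
    moreover have "(n + 2) - 1 = n + 1" "(n + 2) - 2 = n" by simp_all
    ultimately show ?thesis by simp
  qed
  have ustep: "u (n + 1) = a * u n" for n
    using rec[of n] unfolding u_def by (simp add: algebra_simps add.assoc)
  have vstep: "v (n + 1) = b * v n" for n
    using rec[of n] unfolding v_def by (simp add: algebra_simps add.assoc)
  have upow: "u (n + int k) = a ^ k * u n" for n k
  proof (induction k)
    case (Suc k)
    have "u (n + int (Suc k)) = u ((n + int k) + 1)" by (simp add: ac_simps)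
    also have "\<dots> = a * u (n + int k)" by (rule ustep)
    finally show ?case using Suc by simp
  qed simp
  have vpow: "v (n + int k) = b ^ k * v n" for n k
  proof (induction k)
    case (Suc k)
    have "v (n + int (Suc k)) = v ((n + int k) + 1)" by (simp add: ac_simps)
    also have "\<dots> = b * v (n + int k)" by (rule vstep)
    finally show ?case using Suc by simp
  qed simp
  have diff: "(a - b) * s n = u n - v n" for n unfolding u_def v_def by (simp add: algebra_simps)
  have sub: "mult_subgroup M" and fin: "finite M" and sp: "smallest_period s (card M)"
    and MI: "M = s ` {0..<int (card M)}" using P unfolding presents_def by auto
  define m where "m = card M"
  have per: "is_period s m" using sp unfolding smallest_period_def m_def by auto
  hence mpos: "m > 0" unfolding is_period_def by auto
  have sper: "s (n + int m) = s n" for n using per unfolding is_period_def by auto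
  show ?thesis
  proof (cases "\<forall>n. u n = 0")
    case True
    hence st: "s (n + 1) = b * s n" for n using True unfolding u_def by (metis eq_iff_diff_eq_0)
    hence "cyclic_seq s" unfolding cyclic_seq_def by blast
    moreover have "M = gen_group {b}" using cyc_case[OF P b st] .
    ultimately show ?thesis by blast
  next
    case Fu: False
    show ?thesis
    proof (cases "\<forall>n. v n = 0")
      case True
      hence st: "s (n + 1) = a * s n" for n using True unfolding v_def by (metis eq_iff_diff_eq_0)
      hence "cyclic_seq s" unfolding cyclic_seq_def by blast
      moreover have "M = gen_group {a}" using cyc_case[OF P a st] .
      ultimately show ?thesis by blast
    next
      case Fv: False
      obtain n1 where n1: "u n1 \<noteq> 0" using Fu by auto
      obtain n2 where n2: "v n2 \<noteq> 0" using Fv by auto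
      have "u (n1 + int m) = u n1" unfolding u_def using sper[of n1] sper[of "n1+1"]
        by (simp add: algebra_simps)
      hence am: "a ^ m = 1" using upow[of n1 m] n1 by simp
      have "v (n2 + int m) = v n2" unfolding v_def using sper[of n2] sper[of "n2+1"]
        by (simp add: algebra_simps)
      hence bm: "b ^ m = 1" using vpow[of n2 m] n2 by simp
      define R where "R = {x::'a. x ^ m = 1}"
      have R: "finite R" "card R \<le> m" using roots_unity_card[OF mpos] unfolding R_def by auto
      have MR: "M \<subseteq> R" using lagrange[OF sub fin] unfolding R_def m_def by auto
      have "card M = card R" using card_mono[OF R(1) MR] R(2) unfolding m_def by simp
      hence "M = R" using card_subset_eq[OF R(1) MR] by simp
      hence abM: "{a, b} \<subseteq> M" using am bm unfolding R_def by auto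
      define G where "G = gen_group {a, b}"
      have GM: "G \<subseteq> M" unfolding G_def using gen_lower[OF sub abM] .
      have Gs: "mult_subgroup G" unfolding G_def using gen_sub[OF sub abM] .
      have Gf: "finite G" using GM fin finite_subset by blast
      have abG: "a \<in> G" "b \<in> G" unfolding G_def using gen_upper[of "{a,b}"] by auto
      define g where "g = card G"
      have "1 \<in> G" using Gs unfolding mult_subgroup_def by auto
      hence gpos: "g > 0" unfolding g_def using Gf card_gt_0_iff by blast
      have gm: "g \<le> m" unfolding g_def m_def using card_mono[OF fin GM] .
      have ag: "a ^ g = 1" and bg: "b ^ g = 1" using lagrange[OF Gs Gf] abG unfolding g_def by auto
      have "s (n + int g) = s n" for n
      proof -
        have "(a - b) * s (n + int g) = (a - b) * s n"
          using diff[of "n + int g"] diff[of n] upow[of n g] vpow[of n g] ag bg by simp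
        thus ?thesis using ab by simp
      qed
      hence "is_period s g" unfolding is_period_def using gpos by auto
      hence "\<not> g < m" using sp gpos unfolding smallest_period_def m_def by auto
      hence "g = m" using gm by simp
      hence "G = M" using card_subset_eq[OF fin GM] unfolding g_def m_def by simp
      thus ?thesis unfolding G_def by simp
    qed
  qed
qed

theorem mainTheorem5:
  fixes a b :: "'a::field"
  assumes "a \<noteq> 0" and "b \<noteq> 0" and "a \<noteq> b"
  shows "(\<forall>M. f_subgroup a b M \<longrightarrow>
            (M = gen_group {a, b} \<or> M = gen_group {a} \<or> M = gen_group {b}))
       \<and> (\<forall>M. f_subgroup a b M \<and> M \<noteq> gen_group {a, b} \<longrightarrow>
            (\<forall>s. f_sequence a b s \<and> presents s M \<longrightarrow> cyclic_seq s) \<and> standard_f_subgroup a b M)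
       \<and> (\<forall>M. f_subgroup a b M \<and> \<not> standard_f_subgroup a b M \<longrightarrow> M = gen_group {a, b})"
  proof (intro conjI allI impI)
  fix M assume "f_subgroup a b M"
  then obtain s where s: "f_sequence a b s" "presents s M" unfolding f_subgroup_def by blast
  have "M = gen_group {a, b} \<or> (cyclic_seq s \<and> (M = gen_group {a} \<or> M = gen_group {b}))"
    by (rule key[OF assms s])
  then show "M = gen_group {a, b} \<or> M = gen_group {a} \<or> M = gen_group {b}" by auto
next
  fix M s assume H: "f_subgroup a b M \<and> M \<noteq> gen_group {a, b}" "f_sequence a b s \<and> presents s M"
  have "M = gen_group {a, b} \<or> (cyclic_seq s \<and> (M = gen_group {a} \<or> M = gen_group {b}))"
    using H(2) by (intro key[OF assms]) auto
  then show "cyclic_seq s" using H(1) by auto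
next
  fix M assume H: "f_subgroup a b M \<and> M \<noteq> gen_group {a, b}"
  have "cyclic_seq s" if "f_sequence a b s" "presents s M" for s
  proof -
    have "M = gen_group {a, b} \<or> (cyclic_seq s \<and> (M = gen_group {a} \<or> M = gen_group {b}))"
      by (rule key[OF assms that])
    then show ?thesis using H by auto
  qed
  then show "standard_f_subgroup a b M" unfolding standard_f_subgroup_def using H by auto
next
  fix M assume H: "f_subgroup a b M \<and> \<not> standard_f_subgroup a b M"
  then obtain s where s: "f_sequence a b s" "presents s M" "\<not> cyclic_seq s"
    unfolding standard_f_subgroup_def by auto
  have "M = gen_group {a, b} \<or> (cyclic_seq s \<and> (M = gen_group {a} \<or> M = gen_group {b}))"
    by (rule key[OF assms s(1,2)])
  then show "M = gen_group {a, b}" using s(3) by auto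
qed

end
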